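(* Let $f:\mathbb{R}^n\to\mathbb{R}\cup\{\infty\}$ be finite and Lipschitz continuous near $\bar x$ and subdifferentially regular at $\bar x$, i.e. $\hat\partial f(\bar x)=\partial f(\bar x)$. Then $\operatorname{calm}f(\bar x)=\operatorname{lip}f(\bar x)$.
   Context: $\operatorname{calm}f(\bar x):=\limsup_{x\to\bar x,\,x\ne\bar x}\frac{|f(x)-f(\bar x)|}{|x-\bar x|}$ and $\operatorname{lip}f(\bar x):=\limsup_{x,x'\to\bar x,\,x\ne x'}\frac{|f(x)-f(x')|}{|x-x'|}$. A vector $v$ is a regular subgradient, $v\in\hat\partial f(\bar x)$, if $f(x)\ge f(\bar x)+\langle v,x-\bar x\rangle+o(|x-\bar x|)$; $v$ is a (general) subgradient, $v\in\partial f(\bar x)$, if there are $x^\nu\to\bar x$ and $v^\nu\in\hat\partial f(x^\nu)$ with $v^\nu\to v$ and $f(x^\nu)\to f(\bar x)$. *)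

theory Defs
  imports "HOL-Analysis.Analysis" "HOL-Library.Extended_Real"
begin

definition calm :: "('a::euclidean_space \<Rightarrow> ereal) \<Rightarrow> 'a \<Rightarrow> ereal" where
  "calm f xb = Limsup (at xb) (\<lambda>x. \<bar>f x - f xb\<bar> / ereal (norm (x - xb)))"

definition lip :: "('a::euclidean_space \<Rightarrow> ereal) \<Rightarrow> 'a \<Rightarrow> ereal" where
  "lip f xb = Limsup (at (xb, xb) within {p. fst p \<noteq> snd p})
      (\<lambda>p. \<bar>f (fst p) - f (snd p)\<bar> / ereal (norm (fst p - snd p)))"

definition regular_subgrad :: "('a::euclidean_space \<Rightarrow> ereal) \<Rightarrow> 'a \<Rightarrow> 'a set" where
  "regular_subgrad f xb = {v. \<bar>f xb\<bar> \<noteq> \<infinity> \<and>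
     (\<forall>e>0. \<forall>\<^sub>F x in at xb. f x \<ge> f xb + ereal (v \<bullet> (x - xb) - e * norm (x - xb)))}"

definition general_subgrad :: "('a::euclidean_space \<Rightarrow> ereal) \<Rightarrow> 'a \<Rightarrow> 'a set" where
  "general_subgrad f xb = {v. \<exists>xs vs. xs \<longlonglongrightarrow> xb \<and> vs \<longlonglongrightarrow> v \<and>
     (\<forall>k. vs k \<in> regular_subgrad f (xs k)) \<and> (\<lambda>k. f (xs k)) \<longlonglongrightarrow> f xb}"

definition lipschitz_near :: "('a::euclidean_space \<Rightarrow> ereal) \<Rightarrow> 'a \<Rightarrow> bool" where
  "lipschitz_near f xb \<longleftrightarrow> (\<exists>d>0. \<exists>L. (\<forall>x\<in>ball xb d. \<bar>f x\<bar> \<noteq> \<infinity>) \<and>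
      (\<forall>x\<in>ball xb d. \<forall>y\<in>ball xb d. \<bar>real_of_ereal (f x) - real_of_ereal (f y)\<bar> \<le> L * dist x y))"

end

theory Submission
  imports Defs "HOL-Real_Asymp.Real_Asymp"
begin

lemma qq_norm_le:
  fixes u w :: "'a::euclidean_space"
  assumes "norm u = 1"
  shows "norm (w - (u \<bullet> w) *\<^sub>R u) \<le> norm w"
proof -
  have uu: "u \<bullet> u = 1" using assms by (simp add: norm_eq_1)
  have "(w - (u \<bullet> w) *\<^sub>R u) \<bullet> (w - (u \<bullet> w) *\<^sub>R u) = w \<bullet> w - (u \<bullet> w)\<^sup>2"
    by (simp add: inner_diff_left inner_diff_right uu inner_commute power2_eq_square algebra_simps)
  thus ?thesis by (simp add: norm_le)
qed


definition Kc :: "real \<Rightarrow> real \<Rightarrow> real" where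
  "Kc L e = 8*(L+e)/e + 1 + e/(4*L)"
definition Vc :: "real \<Rightarrow> real \<Rightarrow> real" where
  "Vc L e = 7*L + 6*e + 2"

lemma key:
  fixes g :: "'a::euclidean_space \<Rightarrow> real" and S :: "'a set"
  assumes L: "L \<ge> 1" and eps: "\<epsilon> > 0"
    and lip: "\<forall>a\<in>S. \<forall>b\<in>S. \<bar>g a - g b\<bar> \<le> L * dist a b"
    and neq: "x \<noteq> x'" and sub: "cball x' (Kc L \<epsilon> * dist x x') \<subseteq> S"
  shows "\<exists>z v \<delta> A. dist z x' \<le> Kc L \<epsilon> * dist x x' \<and> 0 < \<delta> \<and> ball z \<delta> \<subseteq> S \<and>
     (\<forall>y\<in>ball z \<delta>. g z + v \<bullet> (y - z) - A * (norm (y - z))\<^sup>2 \<le> g y) \<and>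
     (g x - g x') / dist x x' - \<epsilon> \<le> v \<bullet> ((1 / dist x x') *\<^sub>R (x - x')) \<and> norm v \<le> Vc L \<epsilon>"
proof -
  define \<rho> where "\<rho> = dist x x'"
  have rho: "\<rho> > 0" using neq by (simp add: \<rho>_def)
  define u where "u = (1/\<rho>) *\<^sub>R (x - x')"
  have nu: "norm u = 1" using rho by (simp add: u_def \<rho>_def dist_norm)
  have uu: "u \<bullet> u = 1" using nu by (simp add: norm_eq_1)
  have xu: "x = x' + \<rho> *\<^sub>R u" using rho by (simp add: u_def)
  define \<sigma> where "\<sigma> = (g x - g x') / \<rho>"
  define M where "M = \<epsilon> / (4*\<rho>)"
  define T where "T = 8*\<rho>*(L+\<epsilon>)/\<epsilon>"
  define r where "r = \<epsilon>*\<rho>/(4*L)"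
  define N where "N = (L+1)/r"
  have Mp: "M > 0" and Tp: "T > 0" and rp: "r > 0" and Np: "N > 0"
    using rho eps L by (auto simp: M_def T_def r_def N_def)
  have KT: "Kc L \<epsilon> * \<rho> = T + \<rho> + r"
    using rho eps L by (simp add: Kc_def T_def r_def field_simps)
  define t where "t y = u \<bullet> (y - x')" for y
  define q where "q y = (y - x') - t y *\<^sub>R u" for y
  define \<Psi> where "\<Psi> y = g y - (\<sigma>-\<epsilon>) * t y + M*(t y - \<rho>)\<^sup>2 + N*(norm (q y))\<^sup>2" for y
  define R where "R = {y. -T \<le> t y \<and> t y \<le> \<rho> \<and> norm (q y) \<le> r}"
  have decomp: "y = x' + t y *\<^sub>R u + q y" for y by (simp add: q_def)
  have qu: "u \<bullet> q y = 0" for y by (simp add: q_def t_def inner_diff_right uu)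
  have nyx: "norm (y - x') \<le> \<bar>t y\<bar> + norm (q y)" for y
  proof -
    have "y - x' = t y *\<^sub>R u + q y" by (simp add: q_def)
    hence "norm (y - x') \<le> norm (t y *\<^sub>R u) + norm (q y)" by (metis norm_triangle_ineq)
    thus ?thesis using nu by simp
  qed
  have RS: "R \<subseteq> cball x' (T + \<rho> + r)"
  proof
    fix y assume "y \<in> R"
    hence "\<bar>t y\<bar> \<le> T + \<rho>" "norm (q y) \<le> r" using Tp rho unfolding R_def by auto
    thus "y \<in> cball x' (T + \<rho> + r)" using nyx[of y] by (simp add: dist_norm norm_minus_commute)
  qed
  have RinS: "R \<subseteq> S" using RS sub KT by (simp add: \<rho>_def)
  have tx: "t x = \<rho>" and qx: "q x = 0" using uu by (simp_all add: t_def q_def xu)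
  have tx': "t x' = 0" and qx': "q x' = 0" by (simp_all add: t_def q_def)
  have x'R: "x' \<in> R" using tx' qx' Tp rho rp by (simp add: R_def)
  have xR: "x \<in> R" using tx qx Tp rho rp by (simp add: R_def)
  have gxx: "g x - g x' = \<sigma> * \<rho>" using rho by (simp add: \<sigma>_def)
  have sigL: "\<bar>\<sigma>\<bar> \<le> L"
  proof -
    have "\<bar>g x - g x'\<bar> \<le> L * \<rho>" using lip RinS xR x'R by (auto simp: \<rho>_def)
    hence "\<bar>\<sigma>\<bar> * \<rho> \<le> L * \<rho>" using gxx rho by (simp add: abs_mult)
    thus ?thesis using rho by simp
  qed
  have lipR: "\<bar>g a - g b\<bar> \<le> L * norm (a - b)" if "a \<in> R" "b \<in> R" for a b
    using lip RinS that by (auto simp: dist_norm)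
  have contg: "continuous_on R g"
  proof -
    have "L-lipschitz_on R g" unfolding lipschitz_on_def using lipR L by (auto simp: dist_norm dist_real_def)
    thus ?thesis by (rule lipschitz_on_continuous_on)
  qed
  have tcont: "continuous_on A t" for A unfolding t_def by (intro continuous_intros)
  have qcont: "continuous_on A q" for A unfolding q_def t_def by (intro continuous_intros)
  have contP: "continuous_on R \<Psi>" unfolding \<Psi>_def
    by (intro continuous_intros contg tcont qcont)
  have closedR: "closed R"
  proof -
    have "closed {y. -T \<le> t y}" by (intro closed_Collect_le continuous_intros tcont)
    moreover have "closed {y. t y \<le> \<rho>}" by (intro closed_Collect_le continuous_intros tcont)
    moreover have "closed {y. norm (q y) \<le> r}" by (intro closed_Collect_le continuous_intros qcont)
    ultimately show ?thesis unfolding R_def by (simp add: Collect_conj_eq closed_Int)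
  qed
  have compR: "compact R" using closedR RS by (meson bounded_cball bounded_subset compact_eq_bounded_closed)
  obtain z where zR: "z \<in> R" and zmin: "\<And>y. y \<in> R \<Longrightarrow> \<Psi> z \<le> \<Psi> y"
    using continuous_attains_inf[OF compR _ contP] x'R by blast
  have tz_range: "-T \<le> t z" "t z \<le> \<rho>" "norm (q z) \<le> r" using zR by (auto simp: R_def)
  have c1: "norm (q z) < r"
  proof (rule ccontr)
    assume "\<not> norm (q z) < r"
    hence nge: "norm (q z) \<ge> r" by simp
    define p where "p = x' + t z *\<^sub>R u"
    have tp: "t p = t z" and qp: "q p = 0" using uu by (simp_all add: p_def t_def q_def)
    have pR: "p \<in> R" using tp qp tz_range rp by (simp add: R_def)
    have zp: "z - p = q z" using decomp[of z] by (simp add: p_def algebra_simps)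
    have "\<bar>g z - g p\<bar> \<le> L * norm (q z)" using lipR[OF zR pR] zp by simp
    moreover have "N * norm (q z) > L"
    proof -
      have "N * norm (q z) \<ge> N * r" using nge Np by simp
      also have "N * r = L + 1" using rp by (simp add: N_def)
      finally show ?thesis by simp
    qed
    moreover have "N * (norm (q z))\<^sup>2 = (N * norm (q z)) * norm (q z)" by (simp add: power2_eq_square)
    moreover have "(N * norm (q z)) * norm (q z) > L * norm (q z)"
      using \<open>N * norm (q z) > L\<close> rp nge by (intro mult_strict_right_mono) auto
    ultimately have "N * (norm (q z))\<^sup>2 > \<bar>g z - g p\<bar>" by linarith
    hence "\<Psi> z > \<Psi> p" by (simp add: \<Psi>_def tp qp)
    with zmin[OF pR] show False by simp
  qed
  have c2: "t z < \<rho>"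
  proof (rule ccontr)
    assume "\<not> t z < \<rho>"
    hence tz: "t z = \<rho>" using tz_range by simp
    define y' where "y' = z - \<rho> *\<^sub>R u"
    have ty: "t y' = 0" and qy: "q y' = q z" using uu tz by (simp_all add: y'_def t_def q_def inner_diff_right algebra_simps)
    have yR: "y' \<in> R" using ty qy tz_range Tp rho by (simp add: R_def)
    have zx: "z = x + q z" using decomp[of z] tz xu by simp
    have yx: "y' = x' + q z" by (simp add: y'_def q_def tz)
    have zx2: "z - x = q z" using zx by (metis add_diff_cancel_left')
    have yx2: "y' - x' = q z" using yx by (metis add_diff_cancel_left')
    have zxR: "\<bar>g z - g x\<bar> \<le> L * norm (q z)" using lipR[OF zR xR] zx2 by simp
    have yxR: "\<bar>g y' - g x'\<bar> \<le> L * norm (q z)" using lipR[OF yR x'R] yx2 by simp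
    have "L * norm (q z) \<le> L * r" using tz_range L by simp
    also have "L * r = \<epsilon>*\<rho>/4" using L by (simp add: r_def)
    finally have Lq: "L * norm (q z) \<le> \<epsilon>*\<rho>/4" .
    have Mr: "M * \<rho>\<^sup>2 = \<epsilon>*\<rho>/4" using rho by (simp add: M_def power2_eq_square)
    have "\<Psi> z - \<Psi> y' = g z - g y' - (\<sigma>-\<epsilon>)*\<rho> - M*\<rho>\<^sup>2"
      by (simp add: \<Psi>_def tz ty qy power2_eq_square algebra_simps)
    also have "\<dots> > 0"
    proof -
      have "(\<sigma>-\<epsilon>)*\<rho> = \<sigma>*\<rho> - \<epsilon>*\<rho>" by (simp add: algebra_simps)
      moreover have "\<epsilon>*\<rho> > 0" using eps rho by simp
      ultimately show ?thesis using zxR yxR Lq Mr gxx by linarith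
    qed
    finally have "\<Psi> z > \<Psi> y'" by simp
    with zmin[OF yR] show False by simp
  qed
  have c3: "-T < t z"
  proof (rule ccontr)
    assume "\<not> -T < t z"
    hence tz: "t z = -T" using tz_range by simp
    define y' where "y' = z + T *\<^sub>R u"
    have ty: "t y' = 0" using uu tz by (simp add: y'_def t_def inner_add_right algebra_simps)
    have qy: "q y' = q z"
    proof -
      have "q y' = y' - x'" by (simp add: q_def ty)
      also have "\<dots> = q z" by (simp add: q_def tz y'_def algebra_simps)
      finally show ?thesis .
    qed
    have yR: "y' \<in> R" using ty qy tz_range Tp rho by (simp add: R_def)
    have "\<bar>g y' - g z\<bar> \<le> L * T" using lipR[OF yR zR] Tp nu by (simp add: y'_def)
    moreover have "M*(T*T) = 2*(L*T) + 2*(\<epsilon>*T)" using rho eps by (simp add: M_def T_def field_simps)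
    moreover have "\<Psi> y' - \<Psi> z = g y' - g z - (\<sigma>-\<epsilon>)*T - M*(T*T) - 2*(M*(\<rho>*T))"
      by (simp add: \<Psi>_def tz ty qy power2_eq_square algebra_simps)
    moreover have "M*(\<rho>*T) > 0" using Mp rho Tp by simp
    moreover have "-((\<sigma> - \<epsilon>) * T) \<le> L*T + \<epsilon>*T"
    proof -
      have "(\<epsilon> - \<sigma>)*T \<le> (L+\<epsilon>)*T" using sigL Tp by (intro mult_right_mono) auto
      thus ?thesis by (simp add: algebra_simps)
    qed
    moreover have "\<epsilon>*T > 0" using eps Tp by simp
    ultimately have "\<Psi> y' - \<Psi> z < 0" by linarith
    with zmin[OF yR] show False by simp
  qed
  define \<delta> where "\<delta> = min (min (t z + T) (\<rho> - t z)) (r - norm (q z))"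
  have dp: "\<delta> > 0" using c1 c2 c3 by (simp add: \<delta>_def)
  have tdiff: "t y - t z = u \<bullet> (y - z)" for y by (simp add: t_def inner_diff_right)
  have qdiff: "q y - q z = (y - z) - (u \<bullet> (y - z)) *\<^sub>R u" for y
  proof -
    have "q y - q z = (y - z) - (t y - t z) *\<^sub>R u" by (simp add: q_def algebra_simps)
    thus ?thesis by (simp only: tdiff)
  qed
  have ab: "\<bar>u \<bullet> w\<bar> \<le> norm w" for w using Cauchy_Schwarz_ineq2[of u w] nu by simp
  have bb: "norm (w - (u \<bullet> w) *\<^sub>R u) \<le> norm w" for w using qq_norm_le[OF nu] .
  have ballR: "ball z \<delta> \<subseteq> R"
  proof
    fix y assume "y \<in> ball z \<delta>"
    hence d: "norm (y - z) < \<delta>" by (simp add: dist_norm norm_minus_commute)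
    have "\<bar>t y - t z\<bar> < \<delta>" using ab[of "y - z"] d tdiff[of y] by simp
    moreover have "norm (q y) \<le> norm (q z) + norm (q y - q z)" by (metis norm_triangle_sub add.commute)
    moreover have "norm (q y - q z) < \<delta>" using bb[of "y - z"] d qdiff[of y] by simp
    ultimately show "y \<in> R" unfolding R_def \<delta>_def by auto
  qed
  define v where "v = (\<sigma> - \<epsilon> - 2*M*(t z - \<rho>)) *\<^sub>R u - (2*N) *\<^sub>R q z"
  define A where "A = M + N"
  have ineq: "g z + v \<bullet> (y - z) - A * (norm (y - z))\<^sup>2 \<le> g y" if yb: "y \<in> ball z \<delta>" for y
  proof -
    define w where "w = y - z"
    define a where "a = u \<bullet> w"
    define b where "b = w - a *\<^sub>R u"
    have ty: "t y = t z + a" using tdiff[of y] by (simp add: a_def w_def)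
    have qy: "q y = q z + b" using qdiff[of y] by (simp add: b_def a_def w_def algebra_simps)
    have qzb: "q z \<bullet> b = q z \<bullet> w" using qu[of z] by (simp add: b_def inner_diff_right inner_commute)
    have nqy: "(norm (q y))\<^sup>2 = (norm (q z))\<^sup>2 + 2 * (q z \<bullet> w) + (norm b)\<^sup>2"
    proof -
      have qzb': "b \<bullet> q z = q z \<bullet> w" using qzb by (simp add: inner_commute)
      show ?thesis by (simp add: qy power2_norm_eq_inner inner_add_left inner_add_right qzb qzb')
    qed
    have vw: "v \<bullet> w = (\<sigma> - \<epsilon> - 2*M*(t z - \<rho>)) * a - 2*N*(q z \<bullet> w)"
      by (simp add: v_def a_def inner_diff_left)
    have "\<Psi> z \<le> \<Psi> y" using zmin ballR yb by blast
    hence main: "0 \<le> g y - g z - (\<sigma>-\<epsilon>)*a + M*(2*(t z - \<rho>)*a + a\<^sup>2) + N*(2*(q z \<bullet> w) + (norm b)\<^sup>2)"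
      unfolding \<Psi>_def ty nqy by (simp add: power2_eq_square algebra_simps)
    have a2: "a\<^sup>2 \<le> (norm w)\<^sup>2" using ab[of w] unfolding a_def by (metis abs_norm_cancel power2_abs abs_le_square_iff)
    have b2: "(norm b)\<^sup>2 \<le> (norm w)\<^sup>2" using bb[of w] by (simp add: b_def a_def power_mono)
    have "M * a\<^sup>2 + N * (norm b)\<^sup>2 \<le> A * (norm w)\<^sup>2"
      using a2 b2 Mp Np by (simp add: A_def distrib_right add_mono mult_left_mono)
    moreover have "g z + v \<bullet> w - (M * a\<^sup>2 + N * (norm b)\<^sup>2) \<le> g y"
      using main by (simp add: vw algebra_simps)
    ultimately show ?thesis by (simp add: w_def)
  qed
  have quz: "q z \<bullet> u = 0" using qu[of z] by (simp add: inner_commute)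
  have vu: "v \<bullet> u = \<sigma> - \<epsilon> - 2*M*(t z - \<rho>)"
    by (simp add: v_def inner_diff_left quz uu)
  have vu2: "\<sigma> - \<epsilon> \<le> v \<bullet> u" proof -
    have "M * (t z - \<rho>) \<le> 0" using Mp c2 by (simp add: mult_pos_neg less_imp_le)
    thus ?thesis using vu by simp
  qed
  have nv: "norm v \<le> Vc L \<epsilon>"
  proof -
    have "norm v \<le> \<bar>\<sigma> - \<epsilon> - 2*M*(t z - \<rho>)\<bar> + 2*N*norm (q z)"
      unfolding v_def using norm_triangle_ineq4 nu Np by (metis (no_types, opaque_lifting) abs_of_pos mult_pos_pos norm_scaleR mult.right_neutral zero_less_numeral)
    also have "\<dots> \<le> (L + \<epsilon> + 2*M*(T + \<rho>)) + 2*N*r"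
    proof (rule add_mono)
      have "\<bar>t z - \<rho>\<bar> \<le> T + \<rho>" using c2 c3 by auto
      hence "2*M*\<bar>t z - \<rho>\<bar> \<le> 2*M*(T+\<rho>)" using Mp by simp
      hence "\<bar>2*M*(t z - \<rho>)\<bar> \<le> 2*M*(T+\<rho>)" using Mp by (simp add: abs_mult)
      thus "\<bar>\<sigma> - \<epsilon> - 2*M*(t z - \<rho>)\<bar> \<le> L + \<epsilon> + 2*M*(T + \<rho>)" using sigL eps
        by (smt (verit))
      show "2*N*norm (q z) \<le> 2*N*r" using c1 Np by simp
    qed
    also have "\<dots> = L + \<epsilon> + (4*(L+\<epsilon>) + \<epsilon>/2) + 2*(L+1)"
      using rho eps rp by (simp add: M_def T_def N_def field_simps)
    also have "\<dots> \<le> Vc L \<epsilon>" using eps by (simp add: Vc_def)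
    finally show ?thesis .
  qed
  have dz: "dist z x' \<le> Kc L \<epsilon> * dist x x'"
    using RS zR KT unfolding \<rho>_def by (auto simp: dist_commute subset_iff)
  have bS: "ball z \<delta> \<subseteq> S" using ballR RinS by blast
  have vu3: "(g x - g x') / dist x x' - \<epsilon> \<le> v \<bullet> ((1 / dist x x') *\<^sub>R (x - x'))"
    using vu2 unfolding \<sigma>_def u_def \<rho>_def .
  have ineq': "\<forall>y\<in>ball z \<delta>. g z + v \<bullet> (y - z) - A * (norm (y - z))\<^sup>2 \<le> g y" using ineq by blast
  show ?thesis using dz dp bS ineq' vu3 nv by blast
qed

lemma reg_from_quad:
  fixes f :: "'a::euclidean_space \<Rightarrow> ereal" and g :: "'a \<Rightarrow> real"
  assumes dp: "\<delta> > 0" and fg: "\<forall>y\<in>ball z \<delta>. f y = ereal (g y)"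
    and q: "\<forall>y\<in>ball z \<delta>. g z + v \<bullet> (y - z) - A * (norm (y - z))\<^sup>2 \<le> g y"
  shows "v \<in> regular_subgrad f z"
proof -
  have fz: "f z = ereal (g z)" using fg dp by simp
  have "\<forall>\<^sub>F y in at z. f y \<ge> f z + ereal (v \<bullet> (y - z) - e * norm (y - z))" if e: "e > 0" for e
    unfolding eventually_at
  proof (intro exI[of _ "min \<delta> (e / (\<bar>A\<bar> + 1))"] conjI ballI impI)
    show "0 < min \<delta> (e / (\<bar>A\<bar> + 1))" using dp e by simp
    fix y assume y: "y \<in> UNIV" "y \<noteq> z \<and> dist y z < min \<delta> (e / (\<bar>A\<bar> + 1))"
    define n where "n = norm (y - z)"
    have n0: "n \<ge> 0" by (simp add: n_def)
    have nb: "n < e / (\<bar>A\<bar> + 1)" using y by (simp add: n_def dist_norm)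
    have yb: "y \<in> ball z \<delta>" using y by (simp add: dist_commute)
    have "A * n * n \<le> \<bar>A\<bar> * n * n" using n0 by (intro mult_right_mono) auto
    hence "A * n\<^sup>2 \<le> \<bar>A\<bar> * n * n" by (simp add: power2_eq_square mult.assoc)
    also have "\<dots> \<le> e * n"
    proof -
      have "n * (\<bar>A\<bar> + 1) < e" using nb by (simp add: pos_less_divide_eq)
      hence "\<bar>A\<bar> * n \<le> e" using n0 by (simp add: algebra_simps)
      thus ?thesis using n0 by (simp add: mult_right_mono)
    qed
    finally have "A * n\<^sup>2 \<le> e * n" .
    moreover have "g z + v \<bullet> (y - z) - A * n\<^sup>2 \<le> g y" using q yb by (simp add: n_def)
    ultimately have "g z + (v \<bullet> (y - z) - e * n) \<le> g y" by linarith
    thus "f z + ereal (v \<bullet> (y - z) - e * norm (y - z)) \<le> f y"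
      using fg yb fz by (simp add: n_def)
  qed
  thus ?thesis unfolding regular_subgrad_def using fz by auto
qed

lemma calm_nonneg:
  fixes f :: "'a::euclidean_space \<Rightarrow> ereal"
  shows "0 \<le> calm f xb"
  unfolding calm_def
proof (rule le_Limsup)
  show "at xb \<noteq> bot" by simp
  show "\<forall>\<^sub>F x in at xb. 0 \<le> \<bar>f x - f xb\<bar> / ereal (norm (x - xb))"
    by (intro always_eventually allI zero_le_divide_ereal) auto
qed

lemma calm_ge:
  fixes f :: "'a::euclidean_space \<Rightarrow> ereal" and g :: "'a \<Rightarrow> real"
  assumes vr: "v \<in> regular_subgrad f xb" and v0: "v \<noteq> 0" and e: "e > 0"
    and d: "d > 0" and fg: "\<forall>x\<in>ball xb d. f x = ereal (g x)"
  shows "ereal (norm v - e) \<le> calm f xb"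
  unfolding calm_def Limsup_def
proof (rule INF_greatest)
  fix P assume "P \<in> {P. eventually P (at xb)}"
  hence P: "eventually P (at xb)" by simp
  have R: "\<forall>\<^sub>F x in at xb. f x \<ge> f xb + ereal (v \<bullet> (x - xb) - e * norm (x - xb))"
    using vr e unfolding regular_subgrad_def by auto
  have D: "\<forall>\<^sub>F x in at xb. dist x xb < d" using d eventually_at by blast
  have "\<forall>\<^sub>F x in at xb. P x \<and> f x \<ge> f xb + ereal (v \<bullet> (x - xb) - e * norm (x - xb)) \<and> dist x xb < d"
    using P R D by (simp add: eventually_conj)
  then obtain d' where d': "d' > 0" and
    H: "\<And>x. x \<noteq> xb \<Longrightarrow> dist x xb < d' \<Longrightarrow> P x \<and> f x \<ge> f xb + ereal (v \<bullet> (x - xb) - e * norm (x - xb)) \<and> dist x xb < d"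
    unfolding eventually_at by auto
  define s where "s = d'/2"
  define x where "x = xb + (s / norm v) *\<^sub>R v"
  have sp: "s > 0" using d' by (simp add: s_def)
  have nv: "norm v > 0" using v0 by simp
  have xx: "x - xb = (s / norm v) *\<^sub>R v" by (simp add: x_def)
  have nx: "norm (x - xb) = s" using sp nv by (simp add: xx)
  have xne: "x \<noteq> xb" using nx sp by auto
  have dx: "dist x xb < d'" using nx d' by (simp add: dist_norm s_def)
  from H[OF xne dx] have Px: "P x" and ineq: "f x \<ge> f xb + ereal (v \<bullet> (x - xb) - e * norm (x - xb))"
    and dd: "dist x xb < d" by auto
  have vx: "v \<bullet> (x - xb) = s * norm v" using nv by (simp add: xx power2_norm_eq_inner[symmetric] power2_eq_square)
  have fx: "f x = ereal (g x)" using fg dd by (simp add: dist_commute)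
  have fxb: "f xb = ereal (g xb)" using fg d by simp
  have "g x - g xb \<ge> s * (norm v - e)" using ineq fx fxb vx nx by (simp add: algebra_simps)
  hence "(g x - g xb) / s \<ge> norm v - e" using sp by (simp add: pos_le_divide_eq mult.commute)
  hence "\<bar>g x - g xb\<bar> / s \<ge> norm v - e" using sp
    by (smt (verit, best) divide_right_mono abs_ge_self)
  moreover have "\<bar>f x - f xb\<bar> / ereal (norm (x - xb)) = ereal (\<bar>g x - g xb\<bar> / s)"
    using sp by (simp add: fx fxb nx ereal_divide)
  ultimately have fin: "ereal (norm v - e) \<le> \<bar>f x - f xb\<bar> / ereal (norm (x - xb))" by simp
  show "ereal (norm v - e) \<le> (SUP x\<in>{x. P x}. \<bar>f x - f xb\<bar> / ereal (norm (x - xb)))"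
    by (rule SUP_upper2[where f="\<lambda>x. \<bar>f x - f xb\<bar> / ereal (norm (x - xb))" and A="{x. P x}" and i=x, OF _ fin]) (simp add: Px)
qed

lemma calm_le_lip:
  fixes f :: "'a::euclidean_space \<Rightarrow> ereal"
  shows "calm f xb \<le> lip f xb"
  unfolding calm_def lip_def Limsup_def
proof (rule INF_greatest)
  fix Q assume "Q \<in> {Q. eventually Q (at (xb, xb) within {p. fst p \<noteq> snd p})}"
  then obtain d where d: "d > 0" and
    H: "\<And>p. p \<in> {p. fst p \<noteq> snd p} \<Longrightarrow> p \<noteq> (xb, xb) \<Longrightarrow> dist p (xb, xb) < d \<Longrightarrow> Q p"
    unfolding eventually_at by auto
  define P where "P x = Q (x, xb)" for x
  have P: "eventually P (at xb)" unfolding eventually_at P_def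
    using d H by (intro exI[of _ d]) (auto simp: dist_Pair_Pair)
  define G where "G p = \<bar>f (fst p) - f (snd p)\<bar> / ereal (norm (fst p - snd p))" for p
  have S1: "(SUP x\<in>{x. P x}. \<bar>f x - f xb\<bar> / ereal (norm (x - xb))) \<le> (SUP p\<in>{p. Q p}. G p)"
  proof (rule SUP_least)
    fix x assume "x \<in> {x. P x}"
    hence "(x, xb) \<in> {p. Q p}" by (simp add: P_def)
    moreover have "\<bar>f x - f xb\<bar> / ereal (norm (x - xb)) \<le> G (x, xb)" by (simp add: G_def)
    ultimately show "\<bar>f x - f xb\<bar> / ereal (norm (x - xb)) \<le> (SUP p\<in>{p. Q p}. G p)"
      by (rule SUP_upper2[where f=G])
  qed
  have Pin: "P \<in> {P. eventually P (at xb)}" using P by simp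
  have "(INF P\<in>{P. eventually P (at xb)}. SUP x\<in>{x. P x}. \<bar>f x - f xb\<bar> / ereal (norm (x - xb)))
      \<le> (SUP p\<in>{p. Q p}. G p)"
    by (rule INF_lower2[where f="\<lambda>P. SUP x\<in>{x. P x}. \<bar>f x - f xb\<bar> / ereal (norm (x - xb))", OF Pin S1])
  thus "(INF P\<in>{P. eventually P (at xb)}. SUP x\<in>{x. P x}. \<bar>f x - f xb\<bar> / ereal (norm (x - xb)))
      \<le> (SUP p\<in>{p. Q p}. \<bar>f (fst p) - f (snd p)\<bar> / ereal (norm (fst p - snd p)))"
    by (simp only: G_def)
qed


theorem mainTheorem2:
  fixes f :: "'a::euclidean_space \<Rightarrow> ereal" and xb :: 'a
  assumes "lipschitz_near f xb"
    and "regular_subgrad f xb = general_subgrad f xb"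
  shows "calm f xb = lip f xb"
proof -
  obtain d L0 where d: "d > 0" and fin: "\<forall>x\<in>ball xb d. \<bar>f x\<bar> \<noteq> \<infinity>"
    and lip0: "\<forall>x\<in>ball xb d. \<forall>y\<in>ball xb d. \<bar>real_of_ereal (f x) - real_of_ereal (f y)\<bar> \<le> L0 * dist x y"
    using assms(1) unfolding lipschitz_near_def by blast
  define g where "g x = real_of_ereal (f x)" for x
  define L where "L = max L0 1"
  have L1: "L \<ge> 1" by (simp add: L_def)
  have lipg: "\<forall>a\<in>ball xb d. \<forall>b\<in>ball xb d. \<bar>g a - g b\<bar> \<le> L * dist a b"
  proof (intro ballI)
    fix a b assume "a \<in> ball xb d" "b \<in> ball xb d"
    hence "\<bar>g a - g b\<bar> \<le> L0 * dist a b" using lip0 by (simp add: g_def)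
    also have "\<dots> \<le> L * dist a b" by (simp add: L_def mult_right_mono)
    finally show "\<bar>g a - g b\<bar> \<le> L * dist a b" .
  qed
  have fg: "\<forall>x\<in>ball xb d. f x = ereal (g x)"
    using fin by (auto simp: g_def ereal_real')
  have "lip f xb \<le> calm f xb"
  proof (rule dense_le)
    fix w assume wl: "w < lip f xb"
    show "w \<le> calm f xb"
    proof (cases w)
      case MInf thus ?thesis by simp
    next
      case PInf thus ?thesis using wl by simp
    next
      case (real c)
      show ?thesis
      proof (cases "c \<le> 0")
        case True thus ?thesis using calm_nonneg[of f xb] real by (metis order.trans zero_ereal_def ereal_less_eq(3))
      next
        case False
        hence c0: "c > 0" by simp
        obtain c1 where cc1: "c < c1" and c1l: "ereal c1 < lip f xb"
          using ereal_dense2[OF wl[unfolded real]] by (metis ereal_less(2) ereal_dense2 less_ereal.simps(1) wl real)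
        define \<epsilon> where "\<epsilon> = (c1 - c)/2"
        have ep: "\<epsilon> > 0" using cc1 by (simp add: \<epsilon>_def)
        define K where "K = Kc L \<epsilon>"
        define V where "V = Vc L \<epsilon>"
        have Kp: "K > 0"
        proof -
          have "8*(L+\<epsilon>)/\<epsilon> > 0" "\<epsilon>/(4*L) > 0" using L1 ep by simp_all
          thus ?thesis by (simp add: K_def Kc_def)
        qed
        have freq: "\<exists>a b. a \<noteq> b \<and> dist a xb < \<eta> \<and> dist b xb < \<eta> \<and>
            ereal c1 < \<bar>f a - f b\<bar> / ereal (norm (a - b))" if "\<eta> > 0" for \<eta>
        proof (rule ccontr)
          assume na: "\<not> ?thesis"
          have "\<forall>\<^sub>F p in at (xb, xb) within {p. fst p \<noteq> snd p}.
              \<bar>f (fst p) - f (snd p)\<bar> / ereal (norm (fst p - snd p)) \<le> ereal c1"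
            unfolding eventually_at
          proof (intro exI[of _ \<eta>] conjI ballI impI)
            show "\<eta> > 0" by fact
            fix p assume "p \<in> {p. fst p \<noteq> snd p}" "p \<noteq> (xb, xb) \<and> dist p (xb, xb) < \<eta>"
            moreover have "dist (fst p) xb \<le> dist p (xb, xb)" using dist_fst_le[of p "(xb,xb)"] by simp
            moreover have "dist (snd p) xb \<le> dist p (xb, xb)" using dist_snd_le[of p "(xb,xb)"] by simp
            ultimately show "\<bar>f (fst p) - f (snd p)\<bar> / ereal (norm (fst p - snd p)) \<le> ereal c1"
              using na by force
          qed
          hence "lip f xb \<le> ereal c1" unfolding lip_def by (rule Limsup_bounded)
          thus False using c1l by simp
        qed
        have core: "\<exists>z v. dist z xb < d/(real k+2) \<and> v \<in> regular_subgrad f z \<and> norm v \<le> V \<and> c1 - \<epsilon> \<le> norm v"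
          if xx: "x \<noteq> x'" "dist x xb < d/((1+2*K)*(real k+2))" "dist x' xb < d/((1+2*K)*(real k+2))"
             "c1 < (g x - g x') / dist x x'" for x x' k
        proof -
          define \<eta> where "\<eta> = d/((1+2*K)*(real k+2))"
          have etap: "\<eta> > 0" using d Kp by (simp add: \<eta>_def)
          have eta_eq: "\<eta> * (1 + 2*K) = d/(real k+2)"
          proof -
            have "1 + 2*K \<noteq> 0" "real k + 2 \<noteq> 0" using Kp by auto
            thus ?thesis by (simp add: \<eta>_def)
          qed
          have dk: "d/(real k+2) \<le> d" using d by (simp add: divide_le_eq)
          have h2: "dist x xb < \<eta>" "dist x' xb < \<eta>" using xx by (simp_all add: \<eta>_def)
          have "dist x x' \<le> dist x xb + dist x' xb" by (metis dist_commute dist_triangle)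
          hence dxx: "dist x x' < 2*\<eta>" using h2 by linarith
          have sub: "cball x' (Kc L \<epsilon> * dist x x') \<subseteq> ball xb d"
          proof
            fix y assume "y \<in> cball x' (Kc L \<epsilon> * dist x x')"
            hence "dist x' y \<le> K * dist x x'" by (simp add: K_def)
            also have "\<dots> \<le> K * (2*\<eta>)" using dxx Kp by simp
            finally have a1: "dist x' y \<le> K * (2*\<eta>)" .
            have a2: "dist y xb \<le> dist x' y + dist x' xb" by (metis dist_commute dist_triangle)
            have a3: "K*(2*\<eta>) + \<eta> = \<eta> * (1 + 2*K)" by (simp add: algebra_simps)
            have "dist y xb < \<eta> * (1 + 2*K)" using a1 a2 a3 h2 by linarith
            thus "y \<in> ball xb d" using eta_eq dk by (simp add: dist_commute)
          qed
          obtain z v \<delta> A where zd: "dist z x' \<le> Kc L \<epsilon> * dist x x'" and dp: "0 < \<delta>"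
            and bs: "ball z \<delta> \<subseteq> ball xb d"
            and qd: "\<forall>y\<in>ball z \<delta>. g z + v \<bullet> (y - z) - A * (norm (y - z))\<^sup>2 \<le> g y"
            and vu: "(g x - g x') / dist x x' - \<epsilon> \<le> v \<bullet> ((1 / dist x x') *\<^sub>R (x - x'))"
            and nv: "norm v \<le> Vc L \<epsilon>"
            using key[OF L1 ep lipg xx(1) sub] by blast
          have "dist z xb < d/(real k+2)"
          proof -
            have "dist z xb \<le> dist z x' + dist x' xb" by (rule dist_triangle)
            also have "\<dots> < K * (2*\<eta>) + \<eta>" using zd dxx Kp xx(3)
              by (smt (verit, best) K_def \<eta>_def mult_left_less_imp_less)
            finally show ?thesis using eta_eq by (simp add: algebra_simps)
          qed
          moreover have "v \<in> regular_subgrad f z"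
            using reg_from_quad[OF dp _ qd] fg bs by blast
          moreover have "c1 - \<epsilon> \<le> norm v"
          proof -
            have nu: "norm ((1 / dist x x') *\<^sub>R (x - x')) = 1" using xx(1) by (simp add: dist_norm)
            have "v \<bullet> ((1 / dist x x') *\<^sub>R (x - x')) \<le> norm v * norm ((1 / dist x x') *\<^sub>R (x - x'))"
              by (rule norm_cauchy_schwarz)
            hence "v \<bullet> ((1 / dist x x') *\<^sub>R (x - x')) \<le> norm v" by (simp only: nu mult_1_right)
            thus ?thesis using vu xx(4) by linarith
          qed
          ultimately show ?thesis using nv by (auto simp: V_def)
        qed
        have step: "\<exists>z v. dist z xb < d/(real k+2) \<and> v \<in> regular_subgrad f z \<and> norm v \<le> V \<and> c1 - \<epsilon> \<le> norm v" for k
        proof -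
          have "d/((1+2*K)*(real k+2)) > 0" using d Kp by simp
          then obtain a b where ab: "a \<noteq> b" "dist a xb < d/((1+2*K)*(real k+2))" "dist b xb < d/((1+2*K)*(real k+2))"
            and gt: "ereal c1 < \<bar>f a - f b\<bar> / ereal (norm (a - b))" using freq by blast
          have one: "1 * 1 \<le> (1+2*K)*(real k+2)" using Kp by (intro mult_mono) auto
          have small: "d/((1+2*K)*(real k+2)) \<le> d" using d one by (simp add: divide_le_eq)
          have "a \<in> ball xb d" "b \<in> ball xb d" using ab small by (auto simp: dist_commute)
          hence "f a = ereal (g a)" "f b = ereal (g b)" using fg by auto
          hence "c1 < \<bar>g a - g b\<bar> / dist a b" using gt ab(1) by (simp add: dist_norm)
          thus ?thesis
          proof (cases "g a \<ge> g b")
            case True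
            thus ?thesis using core[OF ab(1) ab(2) ab(3)] \<open>c1 < \<bar>g a - g b\<bar> / dist a b\<close> by simp
          next
            case False
            thus ?thesis using core[OF ab(1)[symmetric] ab(3) ab(2)] \<open>c1 < \<bar>g a - g b\<bar> / dist a b\<close>
              by (simp add: dist_commute)
          qed
        qed
        have "\<exists>h. \<forall>k. dist (fst (h k)) xb < d/(real k+2) \<and> snd (h k) \<in> regular_subgrad f (fst (h k)) \<and>
            norm (snd (h k)) \<le> V \<and> c1 - \<epsilon> \<le> norm (snd (h k))"
        proof (rule choice, rule allI)
          fix k
          from step[of k] obtain z v where "dist z xb < d/(real k+2) \<and> v \<in> regular_subgrad f z \<and> norm v \<le> V \<and> c1 - \<epsilon> \<le> norm v"
            by blast
          thus "\<exists>zv. dist (fst zv) xb < d/(real k+2) \<and> snd zv \<in> regular_subgrad f (fst zv) \<and>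
            norm (snd zv) \<le> V \<and> c1 - \<epsilon> \<le> norm (snd zv)" by (intro exI[of _ "(z, v)"]) simp
        qed
        then obtain h where h: "\<forall>k. dist (fst (h k)) xb < d/(real k+2) \<and> snd (h k) \<in> regular_subgrad f (fst (h k)) \<and>
            norm (snd (h k)) \<le> V \<and> c1 - \<epsilon> \<le> norm (snd (h k))" by blast
        define zs where "zs k = fst (h k)" for k
        define vs where "vs k = snd (h k)" for k
        have zs: "\<And>k. dist (zs k) xb < d/(real k+2)" and vs: "\<And>k. vs k \<in> regular_subgrad f (zs k)"
          and vb: "\<And>k. norm (vs k) \<le> V" and vl: "\<And>k. c1 - \<epsilon> \<le> norm (vs k)"
          using h by (simp_all add: zs_def vs_def)
        have vsin: "\<forall>k. vs k \<in> cball 0 V" using vb by simp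
        obtain l r where "l \<in> cball 0 V" and rm: "strict_mono (r::nat\<Rightarrow>nat)" and vlim: "(vs \<circ> r) \<longlonglongrightarrow> l"
          by (rule seq_compactE[OF compact_imp_seq_compact[OF compact_cball] vsin])
        have zlim: "(zs \<circ> r) \<longlonglongrightarrow> xb"
        proof -
          have lim0: "(\<lambda>k. d/(real k+2)) \<longlonglongrightarrow> 0" by real_asymp
          have bnd: "dist ((zs \<circ> r) k) xb \<le> d/(real k+2)" for k
          proof -
            have "k \<le> r k" using seq_suble[OF rm] by simp
            hence "d/(real (r k)+2) \<le> d/(real k+2)" using d by (simp add: frac_le)
            thus ?thesis using zs[of "r k"] by simp
          qed
          have "(\<lambda>k. dist ((zs \<circ> r) k) xb) \<longlonglongrightarrow> 0"
          proof (rule tendsto_sandwich[of "\<lambda>k. 0" "\<lambda>k. dist ((zs \<circ> r) k) xb" sequentially "\<lambda>k. d/(real k+2)"])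
            show "\<forall>\<^sub>F k in sequentially. 0 \<le> dist ((zs \<circ> r) k) xb" by simp
            show "\<forall>\<^sub>F k in sequentially. dist ((zs \<circ> r) k) xb \<le> d/(real k+2)" using bnd by simp
            show "(\<lambda>k. 0::real) \<longlonglongrightarrow> 0" by simp
            show "(\<lambda>k. d/(real k+2)) \<longlonglongrightarrow> 0" by (rule lim0)
          qed
          thus ?thesis by (rule iffD2[OF tendsto_dist_iff])
        qed
        have zin: "(zs \<circ> r) k \<in> ball xb d" for k
        proof -
          have "d/(real (r k)+2) \<le> d" using d by (simp add: divide_le_eq)
          thus ?thesis using zs[of "r k"] by (simp add: dist_commute)
        qed
        have contg: "isCont g xb"
        proof -
          have "L-lipschitz_on (ball xb d) g" unfolding lipschitz_on_def using lipg L1 by (auto simp: dist_real_def)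
          hence "continuous_on (ball xb d) g" by (rule lipschitz_on_continuous_on)
          thus ?thesis using d by (simp add: continuous_on_eq_continuous_at)
        qed
        have flim: "(\<lambda>k. f ((zs \<circ> r) k)) \<longlonglongrightarrow> f xb"
        proof -
          have "(\<lambda>k. g ((zs \<circ> r) k)) \<longlonglongrightarrow> g xb" by (rule isCont_tendsto_compose[OF contg zlim])
          hence "(\<lambda>k. ereal (g ((zs \<circ> r) k))) \<longlonglongrightarrow> ereal (g xb)" by (rule tendsto_ereal)
          moreover have "f ((zs \<circ> r) k) = ereal (g ((zs \<circ> r) k))" for k using fg zin by blast
          moreover have "f xb = ereal (g xb)" using fg d by simp
          ultimately show ?thesis by simp
        qed
        have lgen: "l \<in> general_subgrad f xb"
          unfolding general_subgrad_def
        proof (rule CollectI, rule exI[of _ "zs \<circ> r"], rule exI[of _ "vs \<circ> r"], intro conjI allI)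
          show "(zs \<circ> r) \<longlonglongrightarrow> xb" by (rule zlim)
          show "(vs \<circ> r) \<longlonglongrightarrow> l" by (rule vlim)
          show "(vs \<circ> r) k \<in> regular_subgrad f ((zs \<circ> r) k)" for k using vs by simp
          show "(\<lambda>k. f ((zs \<circ> r) k)) \<longlonglongrightarrow> f xb" by (rule flim)
        qed
        hence lreg: "l \<in> regular_subgrad f xb" using assms(2) by simp
        have nl: "c1 - \<epsilon> \<le> norm l"
          using tendsto_lowerbound[OF tendsto_norm[OF vlim]] vl by (simp add: o_def)
        have cl: "c < norm l" using nl cc1 unfolding \<epsilon>_def by (simp add: field_simps)
        have l0: "l \<noteq> 0" using cl c0 by auto
        have "ereal (norm l - (norm l - c)) \<le> calm f xb"
          by (rule calm_ge[OF lreg l0 _ d fg]) (use cl in simp)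
        thus ?thesis using real by simp
      qed
    qed
  qed
  thus ?thesis using calm_le_lip[of f xb] by simp
qed

end
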